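(* Fix any quantile vector $\mathbf{q}=(q_1\ge\dots\ge q_N)$ with $q_i\in(0,1)$. Then $\mathrm{STR}(\mathbf{q},\pi)\ge\mathrm{OPT}(\mathbf{q},\pi)$ for every $\pi\in\Pi_{n,m,c}\setminus\mathcal{E}_2$.
   Context: Setting: distributions $F_B,F_S$ with quantile functions $b(q)=\inf\{x:\Pr_{b\sim F_B}[b\le x]\ge q\}$, $s(q)=\inf\{x:\Pr_{s\sim F_S}[s\le x]\ge q\}$, and $b(q)\ge s(q)$ for all $q\in(0,1)$ ($F_B$ first-order stochastically dominates $F_S$). Integers $m\ge n\ge 20$ and $c\ge1$; $N=m+n+2c$. $\Pi_{n,m,c}$ is the set of maps $\pi:[N]\to\{\mathrm{BO},\mathrm{BN},\mathrm{SO},\mathrm{SN}\}$ with $m$, $c$, $n$, $c$ preimages respectively of $\mathrm{BO},\mathrm{BN},\mathrm{SO},\mathrm{SN}$; write $B_{\mathrm{Old}}^\pi,B_{\mathrm{New}}^\pi,S_{\mathrm{Old}}^\pi,S_{\mathrm{New}}^\pi$ for these preimages. Index $i$ labeled as buyer gives a buyer with value $b(q_i)$, labeled as seller gives a seller with value $s(q_i)$; the original market consists of old buyers and old sellers, the augmented market of all agents. $\mathrm{OPT}(\mathbf{q},\pi)$ is the first-best gains from trade in the original market; $\mathrm{STR}(\mathbf{q},\pi)$ is the gains from trade of Seller Trade Reduction in the augmented market. (First best: with buyer values $b^{(1)}\ge\dots$, seller values $s^{(1)}\le\dots$, $r=\max\{i: b^{(i)}\ge s^{(i)}\}$ ($0$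 if none), trade top $r$ buyers with bottom $r$ sellers, gains $\sum_{i\le r}(b^{(i)}-s^{(i)})$. STR: with $s^{(k)}=\infty$ beyond the number of sellers, if $b^{(r)}\ge s^{(r+1)}$ trade $r$ pairs, else only the top $r-1$ buyers with bottom $r-1$ sellers.) Let $p=\lceil n/10\rceil$, $I_1=\{1,\dots,p\}$, $I_2=\{p+1,\dots,2p\}$, $J_1=\{N-p+1,\dots,N\}$, $J_2=\{N-2p+1,\dots,N-p\}$. $\mathcal{E}_1$ is the set of $\pi$ with $|I_1\cap B_{\mathrm{New}}^\pi|\ge2$, $|I_2\cap B_{\mathrm{Old}}^\pi|\ge1$, $|J_1\cap S_{\mathrm{New}}^\pi|\ge2$, $|J_2\cap S_{\mathrm{Old}}^\pi|\ge1$. $\mathcal{E}_2=\{\pi\in\Pi_{n,m,c}:\pi\notin\mathcal{E}_1,\ S_{\mathrm{New}}^\pi\subseteq\{1,\dots,2n+2c\}\}$. *)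

theory Defs
  imports "HOL-Probability.Probability"
begin

definition quantile :: "real measure \<Rightarrow> real \<Rightarrow> real" where
  "quantile M q = Inf {x. q \<le> measure M {..x}}"

datatype label = BO | BN | SO | SN

(* Pi_{n,m,c}: labelings of [N] = {1..N}, N = m+n+2c, with m, c, n, c preimages
   of BO, BN, SO, SN respectively (values outside [N] are irrelevant). *)
definition Nagents :: "nat \<Rightarrow> nat \<Rightarrow> nat \<Rightarrow> nat" where
  "Nagents n m c = m + n + 2 * c"

definition preim :: "nat \<Rightarrow> (nat \<Rightarrow> label) \<Rightarrow> label \<Rightarrow> nat set" where
  "preim N \<pi> l = {i \<in> {1..N}. \<pi> i = l}"

definition PiSet :: "nat \<Rightarrow> nat \<Rightarrow> nat \<Rightarrow> (nat \<Rightarrow> label) set" where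
  "PiSet n m c = {\<pi>. card (preim (Nagents n m c) \<pi> BO) = m
                    \<and> card (preim (Nagents n m c) \<pi> BN) = c
                    \<and> card (preim (Nagents n m c) \<pi> SO) = n
                    \<and> card (preim (Nagents n m c) \<pi> SN) = c}"

definition pp :: "nat \<Rightarrow> nat" where
  "pp n = nat \<lceil>real n / 10\<rceil>"

definition E1 :: "nat \<Rightarrow> nat \<Rightarrow> nat \<Rightarrow> (nat \<Rightarrow> label) set" where
  "E1 n m c = {\<pi> \<in> PiSet n m c.
     (let N = Nagents n m c; p = pp n in
        card ({1..p} \<inter> preim N \<pi> BN) \<ge> 2
      \<and> card ({p+1..2*p} \<inter> preim N \<pi> BO) \<ge> 1
      \<and> card ({N-p+1..N} \<inter> preim N \<pi> SN) \<ge> 2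
      \<and> card ({N-2*p+1..N-p} \<inter> preim N \<pi> SO) \<ge> 1)}"

definition E2 :: "nat \<Rightarrow> nat \<Rightarrow> nat \<Rightarrow> (nat \<Rightarrow> label) set" where
  "E2 n m c = {\<pi> \<in> PiSet n m c. \<pi> \<notin> E1 n m c
     \<and> preim (Nagents n m c) \<pi> SN \<subseteq> {1..2*n+2*c}}"

(* Generic market on value lists.  Buyers sorted decreasingly b^(1) >= b^(2) >= ...,
   sellers sorted increasingly s^(1) <= s^(2) <= ...; list positions are 0-based,
   so b^(i) = bsort!(i-1). *)
definition buyers_sorted :: "real list \<Rightarrow> real list" where
  "buyers_sorted bs = rev (sort bs)"

definition sellers_sorted :: "real list \<Rightarrow> real list" where
  "sellers_sorted ss = sort ss"

(* r = max { i : b^(i) >= s^(i) } (0 if none); s^(i) = infinity beyond the number of sellers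
   (and b^(i) is undefined beyond the number of buyers) *)
definition eff_r :: "real list \<Rightarrow> real list \<Rightarrow> nat" where
  "eff_r bs ss = Max ({0} \<union> {i. 1 \<le> i \<and> i \<le> length bs \<and> i \<le> length ss
       \<and> buyers_sorted bs ! (i-1) \<ge> sellers_sorted ss ! (i-1)})"

definition gft :: "real list \<Rightarrow> real list \<Rightarrow> nat \<Rightarrow> real" where
  "gft bs ss k = (\<Sum>i<k. buyers_sorted bs ! i - sellers_sorted ss ! i)"

definition first_best :: "real list \<Rightarrow> real list \<Rightarrow> real" where
  "first_best bs ss = gft bs ss (eff_r bs ss)"

(* Seller Trade Reduction: if b^(r) >= s^(r+1) (with s^(r+1) = infinity when there are
   only r sellers) trade r pairs, otherwise trade r-1 pairs. *)
definition str_trades :: "real list \<Rightarrow> real list \<Rightarrow> nat" where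
  "str_trades bs ss = (let r = eff_r bs ss in
     if r = 0 then 0
     else if r < length ss \<and> buyers_sorted bs ! (r-1) \<ge> sellers_sorted ss ! r then r
     else r - 1)"

definition str_gft :: "real list \<Rightarrow> real list \<Rightarrow> real" where
  "str_gft bs ss = gft bs ss (str_trades bs ss)"

definition vals :: "nat \<Rightarrow> (nat \<Rightarrow> label) \<Rightarrow> label set \<Rightarrow> (real \<Rightarrow> real) \<Rightarrow> (nat \<Rightarrow> real) \<Rightarrow> real list" where
  "vals N \<pi> L v q = map (\<lambda>i. v (q i)) (filter (\<lambda>i. \<pi> i \<in> L) [1..<N+1])"

(* OPT_gft(q,pi): first best in the original market (old buyers, old sellers) *)
definition OPT_gft :: "nat \<Rightarrow> (real \<Rightarrow> real) \<Rightarrow> (real \<Rightarrow> real) \<Rightarrow> (nat \<Rightarrow> real) \<Rightarrow> (nat \<Rightarrow> label) \<Rightarrow> real" where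
  "OPT_gft N b s q \<pi> = first_best (vals N \<pi> {BO} b q) (vals N \<pi> {SO} s q)"

definition STR_gft :: "nat \<Rightarrow> (real \<Rightarrow> real) \<Rightarrow> (real \<Rightarrow> real) \<Rightarrow> (nat \<Rightarrow> real) \<Rightarrow> (nat \<Rightarrow> label) \<Rightarrow> real" where
  "STR_gft N b s q \<pi> = str_gft (vals N \<pi> {BO, BN} b q) (vals N \<pi> {SO, SN} s q)"

end

theory Submission
  imports Defs
begin

lemma quantile_mono:
  assumes M: "real_distribution M" and q: "0 < q1" "q1 \<le> q2" "q2 < 1"
  shows "quantile M q1 \<le> quantile M q2"
proof -
  interpret real_distribution M by (rule M)
  have "eventually (\<lambda>x. cdf M x < q1) at_bot"
    using order_tendstoD(2)[OF cdf_lim_at_bot q(1)] .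
  then obtain x0 where x0: "\<And>x. x \<le> x0 \<Longrightarrow> cdf M x < q1"
    by (auto simp: eventually_at_bot_linorder)
  have "eventually (\<lambda>x. q2 < cdf M x) at_top"
    using order_tendstoD(1)[OF cdf_lim_at_top_prob q(3)] .
  then obtain x1 where x1: "\<And>x. x \<ge> x1 \<Longrightarrow> q2 < cdf M x"
    by (auto simp: eventually_at_top_linorder)
  have bdd: "bdd_below {x. q1 \<le> measure M {..x}}"
  proof (rule bdd_belowI[of _ x0])
    fix x assume "x \<in> {x. q1 \<le> measure M {..x}}"
    then show "x0 \<le> x" using x0[of x] by (force simp: cdf_def)
  qed
  have ne: "{x. q2 \<le> measure M {..x}} \<noteq> {}"
    using x1[of x1] by (auto simp: cdf_def intro!: exI[of _ x1])
  have sub: "{x. q2 \<le> measure M {..x}} \<subseteq> {x. q1 \<le> measure M {..x}}"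
    using q by auto
  show ?thesis unfolding quantile_def by (rule cInf_superset_mono[OF ne bdd sub])
qed

lemma len_filter_bs: "length (filter P (buyers_sorted xs)) = length (filter P xs)"
  unfolding buyers_sorted_def by (metis mset_filter mset_rev mset_sort size_mset)

lemma len_filter_ss: "length (filter P (sellers_sorted xs)) = length (filter P xs)"
  unfolding sellers_sorted_def by (metis mset_filter mset_sort size_mset)

lemma length_bs[simp]: "length (buyers_sorted xs) = length xs"
  by (simp add: buyers_sorted_def)
lemma length_ss[simp]: "length (sellers_sorted xs) = length xs"
  by (simp add: sellers_sorted_def)

lemma bs_mono: "i \<le> j \<Longrightarrow> j < length xs \<Longrightarrow> buyers_sorted xs ! j \<le> buyers_sorted xs ! i"
  unfolding buyers_sorted_def
  by (simp add: rev_nth sorted_nth_mono)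

lemma ss_mono: "i \<le> j \<Longrightarrow> j < length xs \<Longrightarrow> sellers_sorted xs ! i \<le> sellers_sorted xs ! j"
  unfolding sellers_sorted_def
  by (simp add: sorted_nth_mono)

lemma bs_ge:
  fixes xs :: "real list"
  assumes "k < length xs" "k < length (filter (\<lambda>v. x \<le> v) xs)"
  shows "x \<le> buyers_sorted xs ! k"
proof (rule ccontr)
  let ?L = "buyers_sorted xs"
  assume "\<not> x \<le> ?L ! k"
  hence lt: "?L ! k < x" by simp
  have "{j. j < length ?L \<and> x \<le> ?L ! j} \<subseteq> {..<k}"
  proof
    fix j assume j: "j \<in> {j. j < length ?L \<and> x \<le> ?L ! j}"
    show "j \<in> {..<k}"
    proof (rule ccontr)
      assume "j \<notin> {..<k}"
      hence "?L ! j \<le> ?L ! k" using j bs_mono[of k j xs] by auto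
      thus False using j lt by auto
    qed
  qed
  hence "card {j. j < length ?L \<and> x \<le> ?L ! j} \<le> k"
    by (metis card_lessThan card_mono finite_lessThan)
  thus False using assms(2) len_filter_bs[of "\<lambda>v. x \<le> v" xs]
    by (simp add: length_filter_conv_card)
qed

lemma ss_le:
  fixes xs :: "real list"
  assumes "k < length xs" "k < length (filter (\<lambda>v. v \<le> x) xs)"
  shows "sellers_sorted xs ! k \<le> x"
proof (rule ccontr)
  let ?L = "sellers_sorted xs"
  assume "\<not> ?L ! k \<le> x"
  hence lt: "x < ?L ! k" by simp
  have "{j. j < length ?L \<and> ?L ! j \<le> x} \<subseteq> {..<k}"
  proof
    fix j assume j: "j \<in> {j. j < length ?L \<and> ?L ! j \<le> x}"
    show "j \<in> {..<k}"
    proof (rule ccontr)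
      assume "j \<notin> {..<k}"
      hence "?L ! k \<le> ?L ! j" using j ss_mono[of k j xs] by auto
      thus False using j lt by auto
    qed
  qed
  hence "card {j. j < length ?L \<and> ?L ! j \<le> x} \<le> k"
    by (metis card_lessThan card_mono finite_lessThan)
  thus False using assms(2) len_filter_ss[of "\<lambda>v. v \<le> x" xs]
    by (simp add: length_filter_conv_card)
qed

lemma bs_cnt:
  fixes xs :: "real list"
  assumes "k < length xs"
  shows "k < length (filter (\<lambda>v. buyers_sorted xs ! k \<le> v) xs)"
proof -
  let ?L = "buyers_sorted xs"
  have "{..k} \<subseteq> {j. j < length ?L \<and> ?L ! k \<le> ?L ! j}"
    using assms bs_mono[of _ k xs] by auto
  hence "card {..k} \<le> card {j. j < length ?L \<and> ?L ! k \<le> ?L ! j}"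
    by (rule card_mono[rotated]) auto
  thus ?thesis using len_filter_bs[of "\<lambda>v. ?L ! k \<le> v" xs]
    by (simp add: length_filter_conv_card)
qed

lemma ss_cnt:
  fixes xs :: "real list"
  assumes "k < length xs"
  shows "k < length (filter (\<lambda>v. v \<le> sellers_sorted xs ! k) xs)"
proof -
  let ?L = "sellers_sorted xs"
  have "{..k} \<subseteq> {j. j < length ?L \<and> ?L ! j \<le> ?L ! k}"
    using assms ss_mono[of _ k xs] by auto
  hence "card {..k} \<le> card {j. j < length ?L \<and> ?L ! j \<le> ?L ! k}"
    by (rule card_mono[rotated]) auto
  thus ?thesis using len_filter_ss[of "\<lambda>v. v \<le> ?L ! k" xs]
    by (simp add: length_filter_conv_card)
qed

lemma cnt_vals:
  "length (filter P (vals N \<pi> L v q)) = card {i \<in> {1..N}. \<pi> i \<in> L \<and> P (v (q i))}"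
proof -
  have "length (filter P (vals N \<pi> L v q))
      = length (filter (\<lambda>i. \<pi> i \<in> L \<and> P (v (q i))) [1..<N+1])"
    by (simp add: vals_def filter_map filter_filter o_def conj_commute)
  also have "\<dots> = card (set (filter (\<lambda>i. \<pi> i \<in> L \<and> P (v (q i))) [1..<N+1]))"
    by (rule distinct_card[symmetric]) simp
  also have "set (filter (\<lambda>i. \<pi> i \<in> L \<and> P (v (q i))) [1..<N+1]) = {i \<in> {1..N}. \<pi> i \<in> L \<and> P (v (q i))}"
    by auto
  finally show ?thesis .
qed

lemma len_vals: "length (vals N \<pi> L v q) = card {i \<in> {1..N}. \<pi> i \<in> L}"
  using cnt_vals[of "\<lambda>_. True" N \<pi> L v q] by simp

lemma eff_r_fin: "finite ({0} \<union> {i. 1 \<le> i \<and> i \<le> length bs \<and> i \<le> length ss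
       \<and> buyers_sorted bs ! (i-1) \<ge> sellers_sorted ss ! (i-1)})"
  by (rule finite_UnI) (auto intro: finite_subset[of _ "{..length bs}"])

lemma eff_r_ge:
  "1 \<le> i \<Longrightarrow> i \<le> length bs \<Longrightarrow> i \<le> length ss \<Longrightarrow> buyers_sorted bs ! (i-1) \<ge> sellers_sorted ss ! (i-1)
   \<Longrightarrow> i \<le> eff_r bs ss"
  unfolding eff_r_def by (rule Max_ge[OF eff_r_fin]) auto

lemma eff_r_mem:
  "eff_r bs ss = 0 \<or> (1 \<le> eff_r bs ss \<and> eff_r bs ss \<le> length bs \<and> eff_r bs ss \<le> length ss
     \<and> buyers_sorted bs ! (eff_r bs ss - 1) \<ge> sellers_sorted ss ! (eff_r bs ss - 1))"
proof -
  have "eff_r bs ss \<in> {0} \<union> {i. 1 \<le> i \<and> i \<le> length bs \<and> i \<le> length ss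
       \<and> buyers_sorted bs ! (i-1) \<ge> sellers_sorted ss ! (i-1)}"
    unfolding eff_r_def by (rule Max_in[OF eff_r_fin]) auto
  thus ?thesis by auto
qed

lemma eff_r_below:
  fixes bs ss :: "real list"
  assumes "i < eff_r bs ss"
  shows "sellers_sorted ss ! i \<le> buyers_sorted bs ! i"
proof -
  let ?r = "eff_r bs ss"
  have r: "1 \<le> ?r" "?r \<le> length bs" "?r \<le> length ss"
      "buyers_sorted bs ! (?r - 1) \<ge> sellers_sorted ss ! (?r - 1)"
    using eff_r_mem[of bs ss] assms by auto
  have "sellers_sorted ss ! i \<le> sellers_sorted ss ! (?r - 1)"
    using ss_mono[of i "?r - 1" ss] assms r by auto
  also have "\<dots> \<le> buyers_sorted bs ! (?r - 1)" by (rule r(4))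
  also have "\<dots> \<le> buyers_sorted bs ! i"
    using bs_mono[of i "?r - 1" bs] assms r by auto
  finally show ?thesis .
qed

lemma str_le: "str_trades bs ss \<le> eff_r bs ss"
  unfolding str_trades_def Let_def by auto

lemma str_ge:
  fixes bs ss :: "real list"
  assumes "r \<le> eff_r bs ss" "r = 0 \<or> (r < length ss \<and> sellers_sorted ss ! r \<le> buyers_sorted bs ! (r-1))"
  shows "r \<le> str_trades bs ss"
  using assms unfolding str_trades_def Let_def
  by (cases "r = eff_r bs ss") auto

lemma gft_mono:
  fixes bs ss :: "real list"
  assumes "k \<le> k'" "k' \<le> eff_r bs ss"
  shows "gft bs ss k \<le> gft bs ss k'"
proof -
  have "gft bs ss k' = gft bs ss k + (\<Sum>i\<in>{k..<k'}. buyers_sorted bs ! i - sellers_sorted ss ! i)"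
    unfolding gft_def using assms(1)
    by (metis atLeast0LessThan le0 sum.atLeastLessThan_concat)
  moreover have "(\<Sum>i\<in>{k..<k'}. buyers_sorted bs ! i - sellers_sorted ss ! i) \<ge> 0"
    using eff_r_below[of _ bs ss] assms by (intro sum_nonneg) fastforce
  ultimately show ?thesis by simp
qed

theorem lemma3p2:
  fixes FB FS :: "real measure" and n m c :: nat and q :: "nat \<Rightarrow> real" and \<pi> :: "nat \<Rightarrow> label"
  assumes "real_distribution FB" and "real_distribution FS"
    and "\<forall>x. 0 < x \<and> x < 1 \<longrightarrow> quantile FB x \<ge> quantile FS x"
    and "m \<ge> n" and "n \<ge> 20" and "c \<ge> 1"
    and "\<forall>i \<in> {1..Nagents n m c}. 0 < q i \<and> q i < 1"
    and "\<forall>i j. 1 \<le> i \<and> i \<le> j \<and> j \<le> Nagents n m c \<longrightarrow> q j \<le> q i"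
    and "\<pi> \<in> PiSet n m c - E2 n m c"
  shows "STR_gft (Nagents n m c) (quantile FB) (quantile FS) q \<pi>
           \<ge> OPT_gft (Nagents n m c) (quantile FB) (quantile FS) q \<pi>"
proof -
  define N where "N = Nagents n m c"
  define b where "b = quantile FB"
  define s where "s = quantile FS"
  have N: "N = m + n + 2 * c" by (simp add: N_def Nagents_def)
  have qr: "\<And>i. i \<in> {1..N} \<Longrightarrow> 0 < q i \<and> q i < 1" using assms(7) N_def by auto
  have bmono: "\<And>i j. 1 \<le> i \<Longrightarrow> i \<le> j \<Longrightarrow> j \<le> N \<Longrightarrow> b (q j) \<le> b (q i)"
    unfolding b_def using assms(8) qr by (intro quantile_mono[OF assms(1)]) (auto simp: N_def)
  have smono: "\<And>i j. 1 \<le> i \<Longrightarrow> i \<le> j \<Longrightarrow> j \<le> N \<Longrightarrow> s (q j) \<le> s (q i)"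
    unfolding s_def using assms(8) qr by (intro quantile_mono[OF assms(2)]) (auto simp: N_def)
  have sb: "\<And>i. i \<in> {1..N} \<Longrightarrow> s (q i) \<le> b (q i)"
    unfolding s_def b_def using assms(3) qr by auto
  have piS: "\<pi> \<in> PiSet n m c" and notE2: "\<pi> \<notin> E2 n m c" using assms(9) by auto
  have cBO: "card {i \<in> {1..N}. \<pi> i = BO} = m" and cBN: "card {i \<in> {1..N}. \<pi> i = BN} = c"
   and cSO: "card {i \<in> {1..N}. \<pi> i = SO} = n" and cSN: "card {i \<in> {1..N}. \<pi> i = SN} = c"
    using piS by (auto simp: PiSet_def preim_def N_def)
  have ins: "\<And>l. {i \<in> {1..N}. \<pi> i \<in> {l}} = {i \<in> {1..N}. \<pi> i = l}" by auto
  have ins2: "\<And>l l'. {i \<in> {1..N}. \<pi> i \<in> {l, l'}} = {i \<in> {1..N}. \<pi> i = l} \<union> {i \<in> {1..N}. \<pi> i = l'}" by auto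
  have nonBO: "\<And>T. T \<le> N \<Longrightarrow> T \<le> card {i \<in> {1..T}. \<pi> i = BO} + (n + 2 * c)"
  proof -
    fix T assume T: "T \<le> N"
    let ?A = "{i \<in> {1..T}. \<pi> i = BO}"
    let ?B = "{i \<in> {1..N}. \<pi> i = BN}"
    let ?C = "{i \<in> {1..N}. \<pi> i = SO}"
    let ?D = "{i \<in> {1..N}. \<pi> i = SN}"
    have ex: "\<And>i. \<pi> i = BO \<or> \<pi> i = BN \<or> \<pi> i = SO \<or> \<pi> i = SN"
      by (metis label.exhaust)
    have "{1..T} \<subseteq> ?A \<union> (?B \<union> ?C \<union> ?D)"
    proof
      fix i assume "i \<in> {1..T}"
      thus "i \<in> ?A \<union> (?B \<union> ?C \<union> ?D)" using T ex[of i] by auto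
    qed
    hence "card {1..T} \<le> card (?A \<union> (?B \<union> ?C \<union> ?D))"
      by (intro card_mono) auto
    also have "\<dots> \<le> card ?A + card (?B \<union> ?C \<union> ?D)" by (rule card_Un_le)
    also have "card (?B \<union> ?C \<union> ?D) \<le> card (?B \<union> ?C) + card ?D" by (rule card_Un_le)
    also have "card (?B \<union> ?C) \<le> card ?B + card ?C" by (rule card_Un_le)
    finally show "T \<le> card {i \<in> {1..T}. \<pi> i = BO} + (n + 2 * c)" using cBN cSO cSN by simp
  qed
  define bo where "bo = vals N \<pi> {BO} b q"
  define so where "so = vals N \<pi> {SO} s q"
  define ba where "ba = vals N \<pi> {BO, BN} b q"
  define sa where "sa = vals N \<pi> {SO, SN} s q"
  have lbo: "length bo = m" unfolding bo_def len_vals ins using cBO .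
  have lso: "length so = n" unfolding so_def len_vals ins using cSO .
  have lba: "length ba = m + c" unfolding ba_def len_vals ins2
    using cBO cBN by (subst card_Un_disjoint) auto
  have lsa: "length sa = n + c" unfolding sa_def len_vals ins2
    using cSO cSN by (subst card_Un_disjoint) auto
  have F1: "\<And>k. k < m \<Longrightarrow> buyers_sorted bo ! k \<le> buyers_sorted ba ! k"
  proof -
    fix k assume k: "k < m"
    let ?x = "buyers_sorted bo ! k"
    have "k < length (filter (\<lambda>v. ?x \<le> v) bo)" using bs_cnt[of k bo] k lbo by simp
    also have "\<dots> \<le> length (filter (\<lambda>v. ?x \<le> v) ba)"
      unfolding bo_def ba_def cnt_vals by (intro card_mono) auto
    finally show "?x \<le> buyers_sorted ba ! k" using k lba by (intro bs_ge) auto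
  qed
  have F2: "\<And>k. k < n \<Longrightarrow> sellers_sorted sa ! k \<le> sellers_sorted so ! k"
  proof -
    fix k assume k: "k < n"
    let ?x = "sellers_sorted so ! k"
    have "k < length (filter (\<lambda>v. v \<le> ?x) so)" using ss_cnt[of k so] k lso by simp
    also have "\<dots> \<le> length (filter (\<lambda>v. v \<le> ?x) sa)"
      unfolding so_def sa_def cnt_vals by (intro card_mono) auto
    finally show "sellers_sorted sa ! k \<le> ?x" using k lsa by (intro ss_le) auto
  qed
  define r where "r = eff_r bo so"
  have rn: "r \<le> n" using eff_r_mem[of bo so] lso r_def by auto
  have rm: "r \<le> m" using rn assms(4) by simp
  have rr: "r \<le> eff_r ba sa"
  proof (cases "r = 0")
    case False
    hence r: "1 \<le> r" "buyers_sorted bo ! (r - 1) \<ge> sellers_sorted so ! (r - 1)"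
      using eff_r_mem[of bo so] r_def by auto
    have "sellers_sorted sa ! (r-1) \<le> buyers_sorted ba ! (r-1)"
      using F1[of "r-1"] F2[of "r-1"] r rn rm by force
    thus ?thesis using r rn rm lba lsa by (intro eff_r_ge) auto
  qed simp
  have key: "r = 0 \<or> (r < length sa \<and> sellers_sorted sa ! r \<le> buyers_sorted ba ! (r-1))"
  proof (cases "r = 0")
    case False
    hence r: "1 \<le> r" "buyers_sorted bo ! (r - 1) \<ge> sellers_sorted so ! (r - 1)"
      using eff_r_mem[of bo so] r_def by auto
    define x where "x = buyers_sorted bo ! (r - 1)"
    define y where "y = sellers_sorted so ! (r - 1)"
    have yx: "y \<le> x" using r x_def y_def by simp
    have G: "\<And>T. 1 \<le> T \<Longrightarrow> T \<le> N \<Longrightarrow> r \<le> card {i \<in> {1..T}. \<pi> i = BO} \<Longrightarrow> b (q T) \<le> x"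
    proof -
      fix T assume T: "1 \<le> T" "T \<le> N" "r \<le> card {i \<in> {1..T}. \<pi> i = BO}"
      have "card {i \<in> {1..T}. \<pi> i = BO} \<le> length (filter (\<lambda>v. b (q T) \<le> v) bo)"
        unfolding bo_def cnt_vals using T bmono by (intro card_mono) auto
      thus "b (q T) \<le> x" unfolding x_def using T r rm lbo by (intro bs_ge) auto
    qed
    have H: "\<And>T. 1 \<le> T \<Longrightarrow> T \<le> N \<Longrightarrow> card {i \<in> {1..N}. \<pi> i = SO \<and> T < i} < r \<Longrightarrow> s (q T) \<le> x"
    proof -
      fix T assume T: "1 \<le> T" "T \<le> N" "card {i \<in> {1..N}. \<pi> i = SO \<and> T < i} < r"
      have "s (q T) \<le> y"
      proof (rule ccontr)
        assume "\<not> s (q T) \<le> y"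
        hence lt: "y < s (q T)" by simp
        have "r - 1 < length (filter (\<lambda>v. v \<le> y) so)"
          unfolding y_def using ss_cnt[of "r-1" so] r rn lso by simp
        also have "\<dots> \<le> card {i \<in> {1..N}. \<pi> i = SO \<and> T < i}"
          unfolding so_def cnt_vals
        proof (intro card_mono)
          show "{i \<in> {1..N}. \<pi> i \<in> {SO} \<and> s (q i) \<le> y} \<subseteq> {i \<in> {1..N}. \<pi> i = SO \<and> T < i}"
          proof
            fix i assume i: "i \<in> {i \<in> {1..N}. \<pi> i \<in> {SO} \<and> s (q i) \<le> y}"
            have "T < i"
            proof (rule ccontr)
              assume "\<not> T < i"
              hence "s (q T) \<le> s (q i)" using i T smono[of i T] by auto
              thus False using i lt by auto
            qed
            thus "i \<in> {i \<in> {1..N}. \<pi> i = SO \<and> T < i}" using i by auto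
          qed
        qed auto
        finally show False using T(3) by simp
      qed
      thus "s (q T) \<le> x" using yx by simp
    qed
    have claim: "\<exists>t \<in> {1..N}. \<pi> t = SN \<and> s (q t) \<le> x"
    proof (cases "\<pi> \<in> E1 n m c")
      case False
      hence "\<not> preim N \<pi> SN \<subseteq> {1..2*n+2*c}" using piS notE2 by (auto simp: E2_def N_def)
      then obtain t where t0: "t \<in> preim N \<pi> SN" "t \<notin> {1..2*n+2*c}" by blast
      hence t: "t \<in> {1..N}" "\<pi> t = SN" "\<not> t \<le> 2*n+2*c" by (auto simp: preim_def)
      define T where "T = 2*n+2*c"
      have T: "1 \<le> T" "T \<le> N" "T < t" using t assms(5) N assms(4) by (auto simp: T_def)
      have "r \<le> card {i \<in> {1..T}. \<pi> i = BO}" using nonBO[OF T(2)] rn T_def by simp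
      hence "b (q T) \<le> x" using G T by simp
      moreover have "s (q t) \<le> s (q T)" using smono[of T t] T t by simp
      moreover have "s (q T) \<le> b (q T)" using sb T by simp
      ultimately show ?thesis using t by force
    next
      case True
      define p where "p = pp n"
      have p1: "card ({N-p+1..N} \<inter> preim N \<pi> SN) \<ge> 2"
        using True by (simp add: E1_def Let_def N_def p_def)
      have p10: "10 * p < n + 10" "20 \<le> 10 * p"
      proof -
        have "real p = of_int \<lceil>real n / 10\<rceil>" unfolding p_def pp_def by simp
        moreover have "of_int \<lceil>real n / 10\<rceil> < real n / 10 + 1" by linarith
        moreover have "real n / 10 \<le> of_int \<lceil>real n / 10\<rceil>" by linarith
        ultimately have "real p < real n / 10 + 1" "real n / 10 \<le> real p" by auto
        thus "10 * p < n + 10" "20 \<le> 10 * p" using assms(5) by linarith+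
      qed
      define T where "T = N - p"
      have T: "1 \<le> T" "T \<le> N" using p10 N assms(4) by (auto simp: T_def)
      obtain t where t: "t \<in> {N-p+1..N}" "t \<in> preim N \<pi> SN"
        using p1 by (metis card.empty disjoint_iff_not_equal inf_bot_right not_numeral_le_zero)
      have tT: "t \<in> {1..N}" "\<pi> t = SN" "T < t" using t by (auto simp: preim_def T_def)
      show ?thesis
      proof (cases "r \<le> card {i \<in> {1..T}. \<pi> i = BO}")
        case True
        hence "b (q T) \<le> x" using G T by simp
        moreover have "s (q t) \<le> s (q T)" using smono[of T t] T tT by simp
        moreover have "s (q T) \<le> b (q T)" using sb T by simp
        ultimately show ?thesis using tT by force
      next
        case False
        hence rbig: "m - p < r" using nonBO[OF T(2)] N T_def p10 by simp
        have dis: "{i \<in> {1..N}. \<pi> i = SO \<and> T < i} \<inter> ({N-p+1..N} \<inter> preim N \<pi> SN) = {}"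
          by (auto simp: preim_def)
        have sub: "{i \<in> {1..N}. \<pi> i = SO \<and> T < i} \<union> ({N-p+1..N} \<inter> preim N \<pi> SN) \<subseteq> {N-p+1..N}"
          by (auto simp: T_def)
        have "card {i \<in> {1..N}. \<pi> i = SO \<and> T < i} + card ({N-p+1..N} \<inter> preim N \<pi> SN) \<le> card {N-p+1..N}"
          using card_mono[OF _ sub] card_Un_disjoint[OF _ _ dis] by simp
        hence "card {i \<in> {1..N}. \<pi> i = SO \<and> T < i} + 2 \<le> p" using p1 T T_def by simp
        hence "card {i \<in> {1..N}. \<pi> i = SO \<and> T < i} < r" using rbig assms(4) p10 by linarith
        hence "s (q T) \<le> x" using H T by simp
        moreover have "s (q t) \<le> s (q T)" using smono[of T t] T tT by simp
        ultimately show ?thesis using tT by force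
      qed
    qed
    then obtain t where t: "t \<in> {1..N}" "\<pi> t = SN" "s (q t) \<le> x" by blast
    have "length (filter (\<lambda>v. v \<le> x) sa) = card {i \<in> {1..N}. \<pi> i = SO \<and> s (q i) \<le> x} + card {i \<in> {1..N}. \<pi> i = SN \<and> s (q i) \<le> x}"
    proof -
      have "{i \<in> {1..N}. \<pi> i \<in> {SO, SN} \<and> s (q i) \<le> x} = {i \<in> {1..N}. \<pi> i = SO \<and> s (q i) \<le> x} \<union> {i \<in> {1..N}. \<pi> i = SN \<and> s (q i) \<le> x}"
        by auto
      thus ?thesis unfolding sa_def cnt_vals by (simp add: card_Un_disjoint disjoint_iff)
    qed
    moreover have "r \<le> card {i \<in> {1..N}. \<pi> i = SO \<and> s (q i) \<le> x}"
    proof -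
      have "r - 1 < length (filter (\<lambda>v. v \<le> y) so)"
        unfolding y_def using ss_cnt[of "r-1" so] r rn lso by simp
      also have "\<dots> \<le> card {i \<in> {1..N}. \<pi> i = SO \<and> s (q i) \<le> x}"
        unfolding so_def cnt_vals using yx by (intro card_mono) auto
      finally show ?thesis using r by simp
    qed
    moreover have "1 \<le> card {i \<in> {1..N}. \<pi> i = SN \<and> s (q i) \<le> x}"
    proof -
      have "t \<in> {i \<in> {1..N}. \<pi> i = SN \<and> s (q i) \<le> x}" using t by simp
      hence "{i \<in> {1..N}. \<pi> i = SN \<and> s (q i) \<le> x} \<noteq> {}" by blast
      moreover have "finite {i \<in> {1..N}. \<pi> i = SN \<and> s (q i) \<le> x}" by simp
      ultimately show ?thesis by (simp add: Suc_leI card_gt_0_iff)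
    qed
    ultimately have "r < length (filter (\<lambda>v. v \<le> x) sa)" by simp
    hence "sellers_sorted sa ! r \<le> x" using rn lsa assms(6) by (intro ss_le) auto
    also have "x \<le> buyers_sorted ba ! (r - 1)" unfolding x_def using F1[of "r-1"] r rm by simp
    finally show ?thesis using rn lsa assms(6) by simp
  qed simp
  have str: "r \<le> str_trades ba sa" by (rule str_ge[OF rr key])
  have "OPT_gft N b s q \<pi> = gft bo so r"
    by (simp add: OPT_gft_def first_best_def bo_def so_def r_def)
  also have "\<dots> \<le> gft ba sa r"
    unfolding gft_def
  proof (intro sum_mono)
    fix i assume "i \<in> {..<r}"
    hence i: "i < n" "i < m" using rn rm by auto
    show "buyers_sorted bo ! i - sellers_sorted so ! i \<le> buyers_sorted ba ! i - sellers_sorted sa ! i"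
      using F1[OF i(2)] F2[OF i(1)] by simp
  qed
  also have "\<dots> \<le> gft ba sa (str_trades ba sa)"
    using str str_le by (rule gft_mono)
  also have "\<dots> = STR_gft N b s q \<pi>"
    by (simp add: STR_gft_def str_gft_def ba_def sa_def)
  finally show ?thesis by (simp add: N_def b_def s_def)
qed

end
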